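(* Let $X$ be a finite rack. Then every irreducible strong representation of $X$ is either trivial (the zero representation) or finite-dimensional.
   Context: A rack is a set $X$ with a binary operation $\rhd$ such that each map $x\mapsto x\rhd y$ is bijective and $(x\rhd y)\rhd z=(x\rhd z)\rhd(y\rhd z)$. A stabilizing family of $X$ is a finite family $(u_1,\ldots,u_n)$ in $X$ with $(\cdots(x\rhd u_1)\cdots)\rhd u_n=x$ for all $x\in X$. A representation of $X$ is a complex vector space $V$ with a map $\pi:X\to GL(V)$ such that $\pi_{x\rhd y}=\pi_y\pi_x\pi_y^{-1}$ for all $x,y$. It is strong if for every stabilizing family $(u_1,\ldots,u_n)$ one has $\pi_{u_n}\cdots\pi_{u_1}=\mathrm{id}_V$. A subrepresentation is a subspace invariant under all $\pi_x$; the representation is irreducible if its only subrepresentations are $\{0\}$ and $V$. *)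

theory Defs
  imports Complex_Main
begin

definition rack :: "'x set \<Rightarrow> ('x \<Rightarrow> 'x \<Rightarrow> 'x) \<Rightarrow> bool" where
  "rack X op \<longleftrightarrow>
     (\<forall>x\<in>X. \<forall>y\<in>X. op x y \<in> X) \<and>
     (\<forall>y\<in>X. bij_betw (\<lambda>x. op x y) X X) \<and>
     (\<forall>x\<in>X. \<forall>y\<in>X. \<forall>z\<in>X. op (op x y) z = op (op x z) (op y z))"

definition stabilizing_family :: "'x set \<Rightarrow> ('x \<Rightarrow> 'x \<Rightarrow> 'x) \<Rightarrow> 'x list \<Rightarrow> bool" where
  "stabilizing_family X op us \<longleftrightarrow> set us \<subseteq> X \<and> (\<forall>x\<in>X. foldl op x us = x)"

definition rack_representation ::
  "'x set \<Rightarrow> ('x \<Rightarrow> 'x \<Rightarrow> 'x) \<Rightarrow> (complex \<Rightarrow> 'v::ab_group_add \<Rightarrow> 'v) \<Rightarrow> ('x \<Rightarrow> 'v \<Rightarrow> 'v) \<Rightarrow> bool" where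
  "rack_representation X op scale \<pi> \<longleftrightarrow>
     vector_space scale \<and>
     (\<forall>x\<in>X. Vector_Spaces.linear scale scale (\<pi> x) \<and> bij (\<pi> x)) \<and>
     (\<forall>x\<in>X. \<forall>y\<in>X. \<pi> (op x y) = \<pi> y \<circ> \<pi> x \<circ> inv (\<pi> y))"

definition strong_representation ::
  "'x set \<Rightarrow> ('x \<Rightarrow> 'x \<Rightarrow> 'x) \<Rightarrow> (complex \<Rightarrow> 'v::ab_group_add \<Rightarrow> 'v) \<Rightarrow> ('x \<Rightarrow> 'v \<Rightarrow> 'v) \<Rightarrow> bool" where
  "strong_representation X op scale \<pi> \<longleftrightarrow>
     rack_representation X op scale \<pi> \<and>
     (\<forall>us. stabilizing_family X op us \<longrightarrow> foldl (\<lambda>f u. \<pi> u \<circ> f) id us = id)"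

definition irreducible_representation ::
  "'x set \<Rightarrow> (complex \<Rightarrow> 'v::ab_group_add \<Rightarrow> 'v) \<Rightarrow> ('x \<Rightarrow> 'v \<Rightarrow> 'v) \<Rightarrow> bool" where
  "irreducible_representation X scale \<pi> \<longleftrightarrow>
     (\<forall>W. module.subspace scale W \<and> (\<forall>x\<in>X. \<pi> x ` W \<subseteq> W) \<longrightarrow> W = {0} \<or> W = UNIV)"

end

theory Submission
  imports Defs "HOL-Library.FuncSet"
begin

definition pw :: "('x \<Rightarrow> 'v \<Rightarrow> 'v) \<Rightarrow> 'x list \<Rightarrow> 'v \<Rightarrow> 'v" where
  "pw \<pi> w = foldl (\<lambda>f u. \<pi> u \<circ> f) id w"

lemma foldl_comp_gen0:
  fixes \<pi> :: "'x \<Rightarrow> 'v \<Rightarrow> 'v" and g :: "'v \<Rightarrow> 'v"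
  shows "foldl (\<lambda>f u. \<pi> u \<circ> f) g w = foldl (\<lambda>f u. \<pi> u \<circ> f) id w \<circ> g"
proof (induction w arbitrary: g)
  case Nil then show ?case by simp
next
  case (Cons a w)
  note Cons.IH[of "\<pi> a \<circ> g"] Cons.IH[of "\<pi> a"]
  then show ?case by (simp add: comp_assoc)
qed

lemma foldl_comp_gen:
  fixes \<pi> :: "'x \<Rightarrow> 'v \<Rightarrow> 'v" and g :: "'v \<Rightarrow> 'v"
  shows "foldl (\<lambda>f u. \<pi> u \<circ> f) g w = pw \<pi> w \<circ> g"
  unfolding pw_def by (rule foldl_comp_gen0)

lemma pw_append: "pw \<pi> (w @ w') = pw \<pi> w' \<circ> pw \<pi> w"
  by (metis foldl_append foldl_comp_gen pw_def)

lemma pw_snoc: "pw \<pi> (w @ [x]) = \<pi> x \<circ> pw \<pi> w"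
  by (simp add: pw_append pw_def)

lemma foldl_concat_rep:
  "foldl op x (concat (replicate k w)) = ((\<lambda>x. foldl op x w) ^^ k) x"
  by (induction k arbitrary: x) (simp_all, metis funpow_swap1)

lemma foldl_in:
  assumes "\<forall>x\<in>X. \<forall>y\<in>X. op x y \<in> X" "set w \<subseteq> X" "x \<in> X"
  shows "foldl op x w \<in> X"
  using assms by (induction w arbitrary: x) auto

lemma foldl_inj:
  assumes "\<forall>x\<in>X. \<forall>y\<in>X. op x y \<in> X" "\<forall>y\<in>X. inj_on (\<lambda>x. op x y) X" "set w \<subseteq> X"
  shows "inj_on (\<lambda>x. foldl op x w) X"
  using assms
proof (induction w rule: rev_induct)
  case Nil then show ?case by simp
next
  case (snoc a w)
  show ?case
  proof (rule inj_onI)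
    fix x y assume xy: "x \<in> X" "y \<in> X" "foldl op x (w @ [a]) = foldl op y (w @ [a])"
    have a: "a \<in> X" using snoc by auto
    have "foldl op x w \<in> X" "foldl op y w \<in> X" using foldl_in snoc xy by auto
    then have "foldl op x w = foldl op y w"
      using xy(3) a snoc.prems(2) by (auto dest: inj_onD)
    then show "x = y" using snoc xy by (auto dest: inj_onD)
  qed
qed

lemma perm_order:
  assumes fin: "finite X" and maps: "\<forall>x\<in>X. f x \<in> X" and inj: "inj_on f X"
  shows "\<exists>n>0. \<forall>x\<in>X. (f ^^ n) x = x"
proof -
  define g where "g k = restrict (f ^^ k) X" for k :: nat
  have mapk: "\<forall>x\<in>X. (f ^^ k) x \<in> X" for k
    by (induction k) (auto simp: maps)
  have injk: "inj_on (f ^^ k) X" for k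
  proof (induction k)
    case 0 then show ?case by simp
  next
    case (Suc k)
    show ?case using Suc inj mapk[of k] by (auto simp: inj_on_def)
  qed
  have "range g \<subseteq> X \<rightarrow>\<^sub>E X" using mapk by (auto simp: g_def)
  moreover have "finite (X \<rightarrow>\<^sub>E X)" using fin by (simp add: finite_PiE)
  ultimately have "finite (range g)" by (rule finite_subset)
  then have "\<not> inj g" using finite_imageD by fastforce
  then obtain i j where ij: "g i = g j" "i \<noteq> j" unfolding inj_def by blast
  then have "\<exists>i j. g i = g j \<and> i < j" by (metis linorder_neqE_nat)
  then obtain i j where ij: "g i = g j" "i < j" by blast
  show ?thesis
  proof (intro exI[of _ "j - i"] conjI ballI)
    show "0 < j - i" using ij by simp
    fix x assume x: "x \<in> X"
    have "f ^^ j = f ^^ i \<circ> f ^^ (j - i)"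
      using ij(2) by (simp add: funpow_add[symmetric])
    then have "(f ^^ i) ((f ^^ (j - i)) x) = (f ^^ j) x" by simp
    also have "\<dots> = (f ^^ i) x" using fun_cong[OF ij(1), of x] x by (simp add: g_def)
    finally show "(f ^^ (j - i)) x = x"
      using injk[of i] mapk x by (auto dest: inj_onD)
  qed
qed

theorem mainTheorem4:
  fixes X :: "'x set" and op :: "'x \<Rightarrow> 'x \<Rightarrow> 'x"
    and scale :: "complex \<Rightarrow> 'v::ab_group_add \<Rightarrow> 'v" and \<pi> :: "'x \<Rightarrow> 'v \<Rightarrow> 'v"
  assumes "rack X op" and "finite X"
    and "strong_representation X op scale \<pi>"
    and "irreducible_representation X scale \<pi>"
  shows "(UNIV :: 'v set) = {0} \<or> (\<exists>B. finite B \<and> module.span scale B = UNIV)"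
proof -
  have closed: "\<forall>x\<in>X. \<forall>y\<in>X. op x y \<in> X" using assms(1) by (simp add: rack_def)
  have injs: "\<forall>y\<in>X. inj_on (\<lambda>x. op x y) X" using assms(1) by (simp add: rack_def bij_betw_def)
  have vs: "vector_space scale" and lin: "\<And>x. x \<in> X \<Longrightarrow> Vector_Spaces.linear scale scale (\<pi> x)"
    using assms(3) by (auto simp: strong_representation_def rack_representation_def)
  have strong: "\<And>us. set us \<subseteq> X \<Longrightarrow> (\<forall>x\<in>X. foldl op x us = x) \<Longrightarrow> pw \<pi> us = id"
    using assms(3) by (auto simp: strong_representation_def stabilizing_family_def pw_def)
  interpret vector_space scale by (rule vs)
  define \<Phi> where "\<Phi> w = restrict (\<lambda>x. foldl op x w) X" for w
  have key: "pw \<pi> w = pw \<pi> w'" if w: "set w \<subseteq> X" and w': "set w' \<subseteq> X" and e: "\<Phi> w = \<Phi> w'" for w w'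
  proof -
    define f where "f = (\<lambda>x. foldl op x w')"
    have fw': "foldl op x w' = f x" for x by (simp add: f_def)
    have fm: "\<forall>x\<in>X. f x \<in> X" using foldl_in[OF closed w'] by (simp add: f_def)
    have fi: "inj_on f X" using foldl_inj[OF closed injs w'] by (simp add: f_def)
    obtain n where n: "n > 0" "\<forall>x\<in>X. (f ^^ n) x = x" using perm_order[OF assms(2) fm fi] by blast
    define w'' where "w'' = concat (replicate (n - 1) w')"
    have w''X: "set w'' \<subseteq> X" using w' by (auto simp: w''_def)
    have fw'': "foldl op x w'' = (f ^^ (n - 1)) x" for x
      unfolding w''_def foldl_concat_rep f_def by simp
    have eqw: "foldl op x w = f x" if "x \<in> X" for x
      using fun_cong[OF e, of x] that by (simp add: \<Phi>_def f_def)
    have nA: "f ^^ n = f ^^ (n - 1) \<circ> f"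
      using n(1) by (cases n) (simp_all add: funpow_Suc_right del: funpow.simps)
    have nB: "f ^^ n = f \<circ> f ^^ (n - 1)"
      using n(1) by (cases n) simp_all
    have s1: "pw \<pi> (w @ w'') = id"
    proof (rule strong)
      show "set (w @ w'') \<subseteq> X" using w w''X by simp
      show "\<forall>x\<in>X. foldl op x (w @ w'') = x"
      proof
        fix x assume x: "x \<in> X"
        have "foldl op x (w @ w'') = (f ^^ (n - 1)) (f x)" by (simp add: fw'' eqw[OF x])
        also have "\<dots> = (f ^^ n) x" by (simp add: nA)
        finally show "foldl op x (w @ w'') = x" using n(2) x by simp
      qed
    qed
    have s2: "pw \<pi> (w'' @ w') = id"
    proof (rule strong)
      show "set (w'' @ w') \<subseteq> X" using w' w''X by simp
      show "\<forall>x\<in>X. foldl op x (w'' @ w') = x"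
      proof
        fix x assume x: "x \<in> X"
        have "foldl op x (w'' @ w') = f ((f ^^ (n - 1)) x)" by (simp add: fw'' fw')
        also have "\<dots> = (f ^^ n) x" by (simp add: nB)
        finally show "foldl op x (w'' @ w') = x" using n(2) x by simp
      qed
    qed
    have "pw \<pi> w = (pw \<pi> w' \<circ> pw \<pi> w'') \<circ> pw \<pi> w" using s2 by (simp add: pw_append)
    also have "\<dots> = pw \<pi> w' \<circ> (pw \<pi> w'' \<circ> pw \<pi> w)" by (simp add: comp_assoc)
    also have "\<dots> = pw \<pi> w'" using s1 by (simp add: pw_append)
    finally show ?thesis .
  qed
  show ?thesis
  proof (cases "(UNIV :: 'v set) = {0}")
    case True then show ?thesis by simp
  next
    case False
    then obtain v :: 'v where v: "v \<noteq> 0" by blast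
    define B where "B = (\<lambda>w. pw \<pi> w v) ` lists X"
    have finPhi: "finite (\<Phi> ` lists X)"
    proof (rule finite_subset)
      show "\<Phi> ` lists X \<subseteq> X \<rightarrow>\<^sub>E X" by (auto simp: \<Phi>_def subset_code(1) intro!: foldl_in[OF closed])
      show "finite (X \<rightarrow>\<^sub>E X)" using assms(2) by (simp add: finite_PiE)
    qed
    have "B \<subseteq> (\<lambda>h. pw \<pi> (SOME w. w \<in> lists X \<and> \<Phi> w = h) v) ` (\<Phi> ` lists X)"
    proof
      fix b assume "b \<in> B"
      then obtain w where w: "w \<in> lists X" "b = pw \<pi> w v" by (auto simp: B_def)
      define w' where "w' = (SOME w'. w' \<in> lists X \<and> \<Phi> w' = \<Phi> w)"
      have "w' \<in> lists X \<and> \<Phi> w' = \<Phi> w" unfolding w'_def by (rule someI[of _ w]) (use w in auto)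
      then have "pw \<pi> w' = pw \<pi> w" using key w by auto
      then show "b \<in> (\<lambda>h. pw \<pi> (SOME w. w \<in> lists X \<and> \<Phi> w = h) v) ` (\<Phi> ` lists X)"
        using w by (intro image_eqI[of _ _ "\<Phi> w"]) (auto simp: w'_def)
    qed
    then have finB: "finite B" using finPhi finite_subset by blast
    have inv: "\<pi> x ` span B \<subseteq> span B" if x: "x \<in> X" for x
    proof -
      have mh: "module_hom scale scale (\<pi> x)" using lin[OF x] linear_iff_module_hom by blast
      have "\<pi> x ` B \<subseteq> B"
      proof
        fix b assume "b \<in> \<pi> x ` B"
        then obtain w where w: "w \<in> lists X" "b = \<pi> x (pw \<pi> w v)" by (auto simp: B_def)
        then have "b = pw \<pi> (w @ [x]) v" by (simp add: pw_snoc)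
        moreover have "w @ [x] \<in> lists X" using w x by auto
        ultimately show "b \<in> B" by (auto simp: B_def)
      qed
      then have "span (\<pi> x ` B) \<subseteq> span B" by (rule span_mono)
      then show ?thesis using module_hom.span_image[OF mh] by simp
    qed
    have "v \<in> B" unfolding B_def by (rule image_eqI[of _ _ "[]"]) (auto simp: pw_def)
    then have "v \<in> span B" using span_superset by blast
    then have "span B \<noteq> {0}" using v by blast
    then have "span B = UNIV" using assms(4) inv subspace_span
      unfolding irreducible_representation_def by blast
    then show ?thesis using finB by blast
  qed
qed

end
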